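(* Let $N$ be a non-negative integer and let $c_0,c_1,c_2,c_3,c_4$ be parameters satisfying $c_0+c_1+c_2+c_3+c_4=-2N-3$. For non-negative integers $i,j,k,\ell$ with $i+j\le N$ and $k+\ell\le N$, the Tratnik polynomials of Racah type satisfy \[ \sum_{\substack{x,y\in\mathbb{Z}_{\ge 0}\\ x+y\le N}} \Lambda(x;c_1,c_2;N)\,\Omega(y;c_4,c_0,c_3;N-x)\,T_{i,j}(x,y)\,T_{k,\ell}(x,y)=\delta_{i,k}\,\delta_{j,\ell}\,\Lambda(j;c_4,c_0;N)\,\Omega(i;c_1,c_2,c_3;N-j). \]
   Context: Notation: $(a)_n=a(a+1)\cdots(a+n-1)$, $(a)_0=1$; $c_{ij}=c_i+c_j$, $c_{ijk}=c_i+c_j+c_k$. Parameters are assumed generic, so that no denominator below vanishes. For a non-negative integer $N$ and integers $0\le n,x\le N$ define \[ \Omega(n;c_1,c_2,c_3;N)=\binom{N}{n}(2n+c_{23}+1)\frac{(c_2+1)_n(N+2+c_{123})_n(c_1+1)_{N-n}}{(c_3+1)_n(c_{23}+n+1)_{N+1}}, \] \[ p_n(x;c_1,c_2,c_3;N)=\Omega(n;c_1,c_2,c_3;N)\,{}_4F_3\!\left(\begin{matrix}-n,\ n+c_{23}+1,\ -x,\ x+c_{12}+1\\ c_2+1,\ N+2+c_{123},\ -N\end{matrix};1\right), \] (the ${}_4F_3$ series being the terminating sum over $0\le s\le\min(n,x)$), and \[ \Lambda(x;c_1,c_2;N)=(-1)^x\binom{N}{x}(2x+c_{12}+1)\frac{(c_2+1)_x}{(c_1+1)_x(x+c_{12}+1)_{N+1}}.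 \] With $c_0+c_1+c_2+c_3+c_4=-2N-3$, the Tratnik polynomials of Racah type are, for non-negative integers $i,j,x,y$ with $i+j\le N$, $x+y\le N$, \[ T_{i,j}(x,y)=T_{i,j}(x,y;c_1,c_2,c_3,c_4;N)=p_i(x;c_1,c_2,c_3;N-j)\,p_j(y;c_3,c_0,c_4;N-x). \] *)

theory Defs
  imports Complex_Main
begin

definition Omega :: "nat \<Rightarrow> complex \<Rightarrow> complex \<Rightarrow> complex \<Rightarrow> nat \<Rightarrow> complex" where
  "Omega n c1 c2 c3 N =
     of_nat (N choose n) * (2 * of_nat n + c2 + c3 + 1)
     * pochhammer (c2 + 1) n * pochhammer (of_nat N + 2 + c1 + c2 + c3) n
     * pochhammer (c1 + 1) (N - n)
     / (pochhammer (c3 + 1) n * pochhammer (c2 + c3 + of_nat n + 1) (N + 1))"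

definition F43 :: "nat \<Rightarrow> nat \<Rightarrow> complex \<Rightarrow> complex \<Rightarrow> complex \<Rightarrow> nat \<Rightarrow> complex" where
  "F43 n x c1 c2 c3 N =
     (\<Sum>s\<le>min n x.
        pochhammer (- of_nat n) s * pochhammer (of_nat n + c2 + c3 + 1) s
        * pochhammer (- of_nat x) s * pochhammer (of_nat x + c1 + c2 + 1) s
        / (pochhammer (c2 + 1) s * pochhammer (of_nat N + 2 + c1 + c2 + c3) s
           * pochhammer (- of_nat N) s * of_nat (fact s)))"

definition racah_p :: "nat \<Rightarrow> nat \<Rightarrow> complex \<Rightarrow> complex \<Rightarrow> complex \<Rightarrow> nat \<Rightarrow> complex" where
  "racah_p n x c1 c2 c3 N = Omega n c1 c2 c3 N * F43 n x c1 c2 c3 N"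

definition Lambda :: "nat \<Rightarrow> complex \<Rightarrow> complex \<Rightarrow> nat \<Rightarrow> complex" where
  "Lambda x c1 c2 N =
     (-1) ^ x * of_nat (N choose x) * (2 * of_nat x + c1 + c2 + 1)
     * pochhammer (c2 + 1) x
     / (pochhammer (c1 + 1) x * pochhammer (of_nat x + c1 + c2 + 1) (N + 1))"

text \<open>Tratnik polynomial T_{i,j}(x,y; c1,c2,c3,c4; N), with c0 = -2N-3-c1-c2-c3-c4 passed explicitly\<close>
definition tratnik :: "nat \<Rightarrow> nat \<Rightarrow> nat \<Rightarrow> nat \<Rightarrow> complex \<Rightarrow> complex \<Rightarrow> complex \<Rightarrow> complex \<Rightarrow> complex \<Rightarrow> nat \<Rightarrow> complex" where
  "tratnik i j x y c0 c1 c2 c3 c4 N =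
     racah_p i x c1 c2 c3 (N - j) * racah_p j y c3 c0 c4 (N - x)"

end

theory Submission
  imports Defs
begin

lemma nonint_shift: "(z::complex) \<notin> \<int> \<Longrightarrow> w - z \<in> \<int> \<Longrightarrow> w \<notin> \<int>"
  using Ints_diff[of w "w - z"] by auto

lemma nonint_poch: "(z::complex) \<notin> \<int> \<Longrightarrow> pochhammer z n \<noteq> 0"
  by (auto simp: pochhammer_eq_0_iff)

lemma nonint_nz: "(z::complex) \<notin> \<int> \<Longrightarrow> z \<noteq> 0"
  by auto

lemma test: "(c1::complex) + c2 + c3 \<notin> \<int> \<Longrightarrow> of_nat N + 2 + c1 + c2 + c3 \<notin> \<int>"
  apply (erule nonint_shift) apply (simp add: algebra_simps)
  done

definition fz :: "nat \<Rightarrow> complex \<Rightarrow> complex \<Rightarrow> complex \<Rightarrow> complex" where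
  "fz s z c1 c2 = pochhammer (- z) s * pochhammer (z + c1 + c2 + 1) s"

definition Bf :: "complex \<Rightarrow> complex \<Rightarrow> complex \<Rightarrow> complex \<Rightarrow> nat \<Rightarrow> complex" where
  "Bf z c1 c2 c3 N = (z + c2 + 1) * (z + of_nat N + 2 + c1 + c2 + c3) * (z - of_nat N) * (z + c1 + c2 + 1)
      / ((2*z + c1 + c2 + 1) * (2*z + c1 + c2 + 2))"

definition Df :: "complex \<Rightarrow> complex \<Rightarrow> complex \<Rightarrow> complex \<Rightarrow> nat \<Rightarrow> complex" where
  "Df z c1 c2 c3 N = z * (z + c1) * (z - c3 - of_nat N - 1) * (z + c1 + c2 + of_nat N + 1)
      / ((2*z + c1 + c2) * (2*z + c1 + c2 + 1))"

definition Lop :: "(complex \<Rightarrow> complex) \<Rightarrow> complex \<Rightarrow> complex \<Rightarrow> complex \<Rightarrow> complex \<Rightarrow> nat \<Rightarrow> complex" where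
  "Lop u z c1 c2 c3 N = Bf z c1 c2 c3 N * (u (z + 1) - u z) + Df z c1 c2 c3 N * (u (z - 1) - u z)"

lemma fz_Suc: "fz (Suc s) z c1 c2 = fz s z c1 c2 * (of_nat s - z) * (z + c1 + c2 + 1 + of_nat s)"
  by (simp add: fz_def pochhammer_Suc algebra_simps)

lemma fz_Suc_plus: "fz (Suc s) (z + 1) c1 c2 * (z + c1 + c2 + 1) =
   fz s z c1 c2 * (- z - 1) * (z + c1 + c2 + 1 + of_nat s) * (z + c1 + c2 + 2 + of_nat s)"
proof -
  have 1: "pochhammer (- (z + 1)) (Suc s) = (- z - 1) * pochhammer (- z) s"
    by (simp add: pochhammer_rec algebra_simps)
  have "(z + c1 + c2 + 1) * pochhammer (z + 1 + c1 + c2 + 1) (Suc s) = pochhammer (z + c1 + c2 + 1) (Suc (Suc s))"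
    by (subst (2) pochhammer_rec) (simp add: algebra_simps)
  also have "\<dots> = pochhammer (z + c1 + c2 + 1) s * (z + c1 + c2 + 1 + of_nat s) * (z + c1 + c2 + 2 + of_nat s)"
    by (simp add: pochhammer_Suc algebra_simps)
  finally show ?thesis unfolding fz_def 1 by (simp add: algebra_simps)
qed

lemma fz_Suc_minus: "z * fz (Suc s) (z - 1) c1 c2 =
   - fz s z c1 c2 * (of_nat s - z) * (of_nat s + 1 - z) * (z + c1 + c2)"
proof -
  have 1: "pochhammer (z - 1 + c1 + c2 + 1) (Suc s) = (z + c1 + c2) * pochhammer (z + c1 + c2 + 1) s"
    by (simp add: pochhammer_rec algebra_simps)
  have "- z * pochhammer (- (z - 1)) (Suc s) = pochhammer (- z) (Suc (Suc s))"
    by (subst (2) pochhammer_rec) (simp add: algebra_simps)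
  also have "\<dots> = pochhammer (- z) s * (of_nat s - z) * (of_nat s + 1 - z)"
    by (simp add: pochhammer_Suc algebra_simps)
  finally have 2: "z * pochhammer (- (z - 1)) (Suc s) = - (pochhammer (- z) s * (of_nat s - z) * (of_nat s + 1 - z))"
    by (simp add: algebra_simps)
  have "z * fz (Suc s) (z - 1) c1 c2 = (z * pochhammer (- (z - 1)) (Suc s)) * pochhammer (z - 1 + c1 + c2 + 1) (Suc s)"
    by (simp only: fz_def mult.assoc)
  also have "\<dots> = - (pochhammer (- z) s * (of_nat s - z) * (of_nat s + 1 - z)) * ((z + c1 + c2) * pochhammer (z + c1 + c2 + 1) s)"
    by (simp only: 1 2)
  finally show ?thesis by (simp add: fz_def algebra_simps)
qed


lemma diffeq_s:
  assumes d1: "2*z + c1 + c2 + 1 \<noteq> 0" and d2: "2*z + c1 + c2 + 2 \<noteq> 0" and d3: "2*z + c1 + c2 \<noteq> 0"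
    and d4: "z + c1 + c2 + 1 \<noteq> 0"
  shows "Lop (\<lambda>w. fz (Suc s) w c1 c2) z c1 c2 c3 N =
     (of_nat s + 1) * (of_nat s + c2 + c3 + 2) * fz (Suc s) z c1 c2
     - (of_nat s + 1) * (of_nat s + 1 + c2) * (of_nat s + of_nat N + 2 + c1 + c2 + c3) * (of_nat s - of_nat N) * fz s z c1 c2"
proof -
  define g where "g = fz s z c1 c2"
  define S where "S = (of_nat s :: complex)"
  define M where "M = (of_nat N :: complex)"
  define P where "P = (z + c2 + 1) * (z + M + 2 + c1 + c2 + c3) * (z - M)"
  define Dq where "Dq = (z + c1) * (z - c3 - M - 1) * (z + c1 + c2 + M + 1)"
  define T where "T = z + c1 + c2 + 1 + S"
  define r where "r = z + c1 + c2 + 1"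
  define u where "u = 2*z + c1 + c2 + 1"
  define v where "v = 2*z + c1 + c2 + 2"
  define u0 where "u0 = 2*z + c1 + c2"
  have u: "u \<noteq> 0" "v \<noteq> 0" "r \<noteq> 0" "u0 \<noteq> 0" using d1 d2 d3 d4 unfolding u_def v_def r_def u0_def by auto
  have Bf: "Bf z c1 c2 c3 N = P * r / (u * v)"
    unfolding Bf_def P_def r_def u_def v_def M_def by (simp only: mult.assoc)
  have Df: "Df z c1 c2 c3 N = z * Dq / (u0 * u)"
    unfolding Df_def Dq_def u0_def u_def M_def by (simp only: mult.assoc)
  have X0: "fz (Suc s) z c1 c2 = g * (S - z) * T"
    unfolding g_def S_def T_def by (rule fz_Suc)
  have X1: "fz (Suc s) (z + 1) c1 c2 * r = g * (- z - 1) * T * (T + 1)"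
    unfolding g_def S_def T_def r_def fz_Suc_plus by (simp add: algebra_simps)
  have Xm: "z * fz (Suc s) (z - 1) c1 c2 = - g * (S - z) * (S + 1 - z) * (r - 1)"
    unfolding g_def S_def r_def fz_Suc_minus by (simp add: algebra_simps)
  have "Lop (\<lambda>w. fz (Suc s) w c1 c2) z c1 c2 c3 N = Bf z c1 c2 c3 N * (fz (Suc s) (z + 1) c1 c2 - fz (Suc s) z c1 c2)
     + (Df z c1 c2 c3 N * fz (Suc s) (z - 1) c1 c2 - Df z c1 c2 c3 N * fz (Suc s) z c1 c2)"
    by (simp add: Lop_def algebra_simps)
  also have "Bf z c1 c2 c3 N * (fz (Suc s) (z + 1) c1 c2 - fz (Suc s) z c1 c2) = - (S + 1) * P * g * T / u"
  proof -
    have X1': "fz (Suc s) (z + 1) c1 c2 = (g * (- z - 1) * T * (T + 1)) / r"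
      using X1 u(3) by (subst eq_divide_eq) simp
    have e: "fz (Suc s) (z + 1) c1 c2 - fz (Suc s) z c1 c2 = (g * (- z - 1) * T * (T + 1) - g * (S - z) * T * r) / r"
      unfolding X1' X0 using u(3) by (simp add: field_simps)
    have e2: "g * (- z - 1) * T * (T + 1) - g * (S - z) * T * r = - (S + 1) * v * g * T"
      unfolding T_def r_def v_def by algebra
    show ?thesis unfolding e e2 Bf using u by (simp add: field_simps)
  qed
  also have "Df z c1 c2 c3 N * fz (Suc s) (z - 1) c1 c2 - Df z c1 c2 c3 N * fz (Suc s) z c1 c2 = - (S + 1) * Dq * g * (S - z) / u"
  proof -
    have e: "Df z c1 c2 c3 N * fz (Suc s) (z - 1) c1 c2 - Df z c1 c2 c3 N * fz (Suc s) z c1 c2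
       = Dq / (u0 * u) * (z * fz (Suc s) (z - 1) c1 c2 - z * fz (Suc s) z c1 c2)"
      unfolding Df by (simp add: algebra_simps)
    have e2: "z * fz (Suc s) (z - 1) c1 c2 - z * fz (Suc s) z c1 c2 = - (S + 1) * u0 * g * (S - z)"
      unfolding Xm X0 unfolding T_def r_def u0_def by algebra
    show ?thesis unfolding e e2 using u by (simp add: field_simps)
  qed
  also have "- (S + 1) * P * g * T / u + - (S + 1) * Dq * g * (S - z) / u =
     (S + 1) * (S + c2 + c3 + 2) * (g * (S - z) * T)
     - (S + 1) * (S + 1 + c2) * (S + M + 2 + c1 + c2 + c3) * (S - M) * g"
  proof -
    define W where "W = (S + c2 + c3 + 2) * (S - z) * T - (S + 1 + c2) * (S + M + 2 + c1 + c2 + c3) * (S - M)"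
    have H: "- (P * T + Dq * (S - z)) = u * W"
      unfolding P_def Dq_def T_def u_def W_def by algebra
    have "- (S + 1) * P * g * T / u + - (S + 1) * Dq * g * (S - z) / u = (S + 1) * g * (- (P * T + Dq * (S - z))) / u"
      using u by (simp add: field_simps)
    also have "\<dots> = (S + 1) * g * W" unfolding H using u by simp
    also have "\<dots> = (S + 1) * (S + c2 + c3 + 2) * (g * (S - z) * T)
     - (S + 1) * (S + 1 + c2) * (S + M + 2 + c1 + c2 + c3) * (S - M) * g"
      unfolding W_def by (simp add: algebra_simps)
    finally show ?thesis .
  qed
  finally show ?thesis unfolding X0 S_def M_def g_def T_def .
qed

lemma nz_of: "(z::complex) \<notin> \<int> \<Longrightarrow> w - z \<in> \<int> \<Longrightarrow> w \<noteq> 0"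
  using nonint_shift by fastforce

lemma poch_nz_of: "(z::complex) \<notin> \<int> \<Longrightarrow> w - z \<in> \<int> \<Longrightarrow> pochhammer w n \<noteq> 0"
  using nonint_shift nonint_poch by blast

definition gen :: "complex \<Rightarrow> complex \<Rightarrow> complex \<Rightarrow> bool" where
  "gen c1 c2 c3 \<longleftrightarrow> c1 \<notin> \<int> \<and> c2 \<notin> \<int> \<and> c3 \<notin> \<int> \<and> c1 + c2 \<notin> \<int> \<and> c2 + c3 \<notin> \<int> \<and> c1 + c2 + c3 \<notin> \<int>"

definition Acf :: "nat \<Rightarrow> nat \<Rightarrow> complex \<Rightarrow> complex \<Rightarrow> complex \<Rightarrow> nat \<Rightarrow> complex" where
  "Acf n s c1 c2 c3 N = pochhammer (- of_nat n) s * pochhammer (of_nat n + c2 + c3 + 1) s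
     / (pochhammer (c2 + 1) s * pochhammer (of_nat N + 2 + c1 + c2 + c3) s * pochhammer (- of_nat N) s * of_nat (fact s))"

definition Fz :: "nat \<Rightarrow> complex \<Rightarrow> complex \<Rightarrow> complex \<Rightarrow> complex \<Rightarrow> nat \<Rightarrow> complex" where
  "Fz n z c1 c2 c3 N = (\<Sum>s\<le>n. Acf n s c1 c2 c3 N * fz s z c1 c2)"

lemma F43_Fz: "F43 n x c1 c2 c3 N = Fz n (of_nat x) c1 c2 c3 N"
proof -
  have "F43 n x c1 c2 c3 N = (\<Sum>s\<le>min n x. Acf n s c1 c2 c3 N * fz s (of_nat x) c1 c2)"
    unfolding F43_def Acf_def fz_def by (rule sum.cong) (simp_all add: algebra_simps)
  also have "\<dots> = Fz n (of_nat x) c1 c2 c3 N"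
    unfolding Fz_def
    by (rule sum.mono_neutral_left) (auto simp: fz_def pochhammer_of_nat_eq_0_iff)
  finally show ?thesis .
qed

lemma Lop_sum: "Lop (\<lambda>w. \<Sum>s\<in>A. c s * f s w) z c1 c2 c3 N = (\<Sum>s\<in>A. c s * Lop (f s) z c1 c2 c3 N)"
  unfolding Lop_def
  by (simp add: sum_subtractf[symmetric] sum_distrib_left sum.distrib[symmetric] algebra_simps)

lemma Lop_fz:
  assumes d1: "2*z + c1 + c2 + 1 \<noteq> 0" and d2: "2*z + c1 + c2 + 2 \<noteq> 0" and d3: "2*z + c1 + c2 \<noteq> 0"
    and d4: "z + c1 + c2 + 1 \<noteq> 0"
  shows "Lop (\<lambda>w. fz s w c1 c2) z c1 c2 c3 N = of_nat s * (of_nat s + c2 + c3 + 1) * fz s z c1 c2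
     + (if s = 0 then 0 else - (of_nat s) * (of_nat s + c2) * (of_nat s + of_nat N + 1 + c1 + c2 + c3) * (of_nat s - 1 - of_nat N) * fz (s - 1) z c1 c2)"
proof (cases s)
  case 0
  then show ?thesis by (simp add: Lop_def fz_def)
next
  case (Suc t)
  show ?thesis unfolding Suc using diffeq_s[OF d1 d2 d3 d4, of t c3 N]
    by (simp add: algebra_simps)
qed

lemma Acf_Suc:
  assumes g: "gen c1 c2 c3" and sn: "s < n" and nN: "n \<le> N"
  shows "Acf n (Suc s) c1 c2 c3 N * (- (of_nat s + 1) * (of_nat s + 1 + c2) * (of_nat s + of_nat N + 2 + c1 + c2 + c3) * (of_nat s - of_nat N))
    = (of_nat n * (of_nat n + c2 + c3 + 1) - of_nat s * (of_nat s + c2 + c3 + 1)) * Acf n s c1 c2 c3 N"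
proof -
  from g have c2: "c2 \<notin> \<int>" and c123: "c1 + c2 + c3 \<notin> \<int>" by (auto simp: gen_def)
  have n1: "pochhammer (c2 + 1) s \<noteq> 0" by (rule poch_nz_of[OF c2]) simp
  have n2: "pochhammer (of_nat N + 2 + c1 + c2 + c3) s \<noteq> 0" by (rule poch_nz_of[OF c123]) (simp add: algebra_simps)
  have n3: "pochhammer (- of_nat N :: complex) s \<noteq> 0" using sn nN by (simp add: pochhammer_of_nat_eq_0_iff)
  have n4: "c2 + 1 + of_nat s \<noteq> 0" by (rule nz_of[OF c2]) simp
  have n5: "of_nat N + 2 + c1 + c2 + c3 + of_nat s \<noteq> 0" by (rule nz_of[OF c123]) (simp add: algebra_simps)
  have n6: "(of_nat s :: complex) - of_nat N \<noteq> 0" using sn nN by simp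
  have n7: "(of_nat s :: complex) + 1 \<noteq> 0" by (metis of_nat_Suc of_nat_eq_0_iff add.commute nat.distinct(1))
  have n8: "(of_nat (fact s) :: complex) \<noteq> 0" by simp
  have "Acf n (Suc s) c1 c2 c3 N = Acf n s c1 c2 c3 N * ((of_nat s - of_nat n) * (of_nat n + c2 + c3 + 1 + of_nat s))
     / ((c2 + 1 + of_nat s) * (of_nat N + 2 + c1 + c2 + c3 + of_nat s) * (of_nat s - of_nat N) * (of_nat s + 1))"
    unfolding Acf_def pochhammer_Suc fact_Suc of_nat_mult
    using n1 n2 n3 n4 n5 n6 n7 n8
    by (simp add: field_simps)
  note eq = this
  define Dn where "Dn = (c2 + 1 + of_nat s) * (of_nat N + 2 + c1 + c2 + c3 + of_nat s) * (of_nat s - of_nat N) * (of_nat s + (1::complex))"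
  have Dn0: "Dn \<noteq> 0" unfolding Dn_def using n4 n5 n6 n7 by simp
  have nu: "- (of_nat s + 1) * (of_nat s + 1 + c2) * (of_nat s + of_nat N + 2 + c1 + c2 + c3) * (of_nat s - of_nat N) = - Dn"
    unfolding Dn_def by (simp add: algebra_simps)
  have "Acf n s c1 c2 c3 N * ((of_nat s - of_nat n) * (of_nat n + c2 + c3 + 1 + of_nat s)) / Dn * (- Dn)
     = - (Acf n s c1 c2 c3 N * ((of_nat s - of_nat n) * (of_nat n + c2 + c3 + 1 + of_nat s)))"
    using Dn0 by simp
  then show ?thesis unfolding eq nu Dn_def[symmetric]
    by (simp add: algebra_simps)
qed


lemma sum_shift_if: "(\<Sum>s\<le>n. (if s = 0 then 0 else h s)) = (\<Sum>t<n. h (Suc t))" for h :: "nat \<Rightarrow> complex"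
proof (cases n)
  case 0 then show ?thesis by simp
next
  case (Suc m)
  show ?thesis unfolding Suc sum.atMost_Suc_shift by (simp add: lessThan_Suc_atMost)
qed

lemma diffeq_F:
  assumes g: "gen c1 c2 c3" and nN: "n \<le> N"
    and d1: "2*z + c1 + c2 + 1 \<noteq> 0" and d2: "2*z + c1 + c2 + 2 \<noteq> 0" and d3: "2*z + c1 + c2 \<noteq> 0"
    and d4: "z + c1 + c2 + 1 \<noteq> 0"
  shows "Lop (\<lambda>w. Fz n w c1 c2 c3 N) z c1 c2 c3 N = of_nat n * (of_nat n + c2 + c3 + 1) * Fz n z c1 c2 c3 N"
proof -
  define A where "A s = Acf n s c1 c2 c3 N" for s
  define f where "f s = fz s z c1 c2" for s
  define mu where "mu s = of_nat s * (of_nat s + c2 + c3 + 1)" for s :: nat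
  have "Lop (\<lambda>w. Fz n w c1 c2 c3 N) z c1 c2 c3 N = (\<Sum>s\<le>n. A s * Lop (\<lambda>w. fz s w c1 c2) z c1 c2 c3 N)"
    unfolding Fz_def A_def by (rule Lop_sum)
  also have "\<dots> = (\<Sum>s\<le>n. A s * (mu s * f s)) + (\<Sum>s\<le>n. (if s = 0 then 0 else A s * (- (of_nat s) * (of_nat s + c2) * (of_nat s + of_nat N + 1 + c1 + c2 + c3) * (of_nat s - 1 - of_nat N) * f (s - 1))))"
    unfolding Lop_fz[OF d1 d2 d3 d4] sum.distrib[symmetric] mu_def f_def
    by (rule sum.cong) (auto simp: algebra_simps)
  also have "(\<Sum>s\<le>n. (if s = 0 then 0 else A s * (- (of_nat s) * (of_nat s + c2) * (of_nat s + of_nat N + 1 + c1 + c2 + c3) * (of_nat s - 1 - of_nat N) * f (s - 1))))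
     = (\<Sum>t<n. (mu n - mu t) * A t * f t)"
    unfolding sum_shift_if
  proof (rule sum.cong)
    fix t assume "t \<in> {..<n}"
    then have tn: "t < n" by simp
    have "A (Suc t) * (- (of_nat (Suc t)) * (of_nat (Suc t) + c2) * (of_nat (Suc t) + of_nat N + 1 + c1 + c2 + c3) * (of_nat (Suc t) - 1 - of_nat N))
      = Acf n (Suc t) c1 c2 c3 N * (- (of_nat t + 1) * (of_nat t + 1 + c2) * (of_nat t + of_nat N + 2 + c1 + c2 + c3) * (of_nat t - of_nat N))"
      unfolding A_def by (simp add: algebra_simps)
    also have "\<dots> = (mu n - mu t) * A t" unfolding Acf_Suc[OF g tn nN] mu_def A_def ..
    finally have eqt: "A (Suc t) * (- (of_nat (Suc t)) * (of_nat (Suc t) + c2) * (of_nat (Suc t) + of_nat N + 1 + c1 + c2 + c3) * (of_nat (Suc t) - 1 - of_nat N)) = (mu n - mu t) * A t" .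
    have "A (Suc t) * (- (of_nat (Suc t)) * (of_nat (Suc t) + c2) * (of_nat (Suc t) + of_nat N + 1 + c1 + c2 + c3) * (of_nat (Suc t) - 1 - of_nat N) * f (Suc t - 1))
      = (A (Suc t) * (- (of_nat (Suc t)) * (of_nat (Suc t) + c2) * (of_nat (Suc t) + of_nat N + 1 + c1 + c2 + c3) * (of_nat (Suc t) - 1 - of_nat N))) * f t"
      by (simp only: mult.assoc diff_Suc_1)
    then show "A (Suc t) * (- (of_nat (Suc t)) * (of_nat (Suc t) + c2) * (of_nat (Suc t) + of_nat N + 1 + c1 + c2 + c3) * (of_nat (Suc t) - 1 - of_nat N) * f (Suc t - 1))
      = (mu n - mu t) * A t * f t" unfolding eqt .
  qed simp
  also have "(\<Sum>s\<le>n. A s * (mu s * f s)) + (\<Sum>t<n. (mu n - mu t) * A t * f t) = mu n * (\<Sum>s\<le>n. A s * f s)"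
  proof -
    have "(\<Sum>s\<le>n. A s * (mu s * f s)) + (\<Sum>t<n. (mu n - mu t) * A t * f t)
       = ((\<Sum>s<n. A s * (mu s * f s)) + (\<Sum>t<n. (mu n - mu t) * A t * f t)) + A n * (mu n * f n)"
      unfolding lessThan_Suc_atMost[symmetric] sum.lessThan_Suc by (simp add: algebra_simps)
    also have "(\<Sum>s<n. A s * (mu s * f s)) + (\<Sum>t<n. (mu n - mu t) * A t * f t) = (\<Sum>s<n. mu n * (A s * f s))"
      unfolding sum.distrib[symmetric] by (rule sum.cong) (simp_all add: algebra_simps)
    also have "(\<Sum>s<n. mu n * (A s * f s)) + A n * (mu n * f n) = mu n * (\<Sum>s\<le>n. A s * f s)"
      unfolding lessThan_Suc_atMost[symmetric] sum.lessThan_Suc by (simp add: sum_distrib_left algebra_simps)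
    finally show ?thesis .
  qed
  finally show ?thesis unfolding mu_def A_def f_def Fz_def .
qed


lemma sbp:
  fixes w b d :: "nat \<Rightarrow> complex" and u v :: "complex \<Rightarrow> complex"
  assumes wb: "\<And>x. x < N \<Longrightarrow> w x * b x = w (Suc x) * d (Suc x)" and bN: "b N = 0" and d0: "d 0 = 0"
  shows "(\<Sum>x\<le>N. w x * (b x * (u (of_nat x + 1) - u (of_nat x)) + d x * (u (of_nat x - 1) - u (of_nat x))) * v (of_nat x))
     = - (\<Sum>x<N. w (Suc x) * d (Suc x) * (u (of_nat x + 1) - u (of_nat x)) * (v (of_nat x + 1) - v (of_nat x)))"
proof -
  have split: "(\<Sum>x\<le>N. w x * (b x * (u (of_nat x + 1) - u (of_nat x)) + d x * (u (of_nat x - 1) - u (of_nat x))) * v (of_nat x))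
    = (\<Sum>x\<le>N. w x * b x * (u (of_nat x + 1) - u (of_nat x)) * v (of_nat x))
    + (\<Sum>x\<le>N. w x * d x * (u (of_nat x - 1) - u (of_nat x)) * v (of_nat x))"
    by (simp add: sum.distrib[symmetric] algebra_simps)
  have s1: "(\<Sum>x\<le>N. w x * b x * (u (of_nat x + 1) - u (of_nat x)) * v (of_nat x))
     = (\<Sum>x<N. w (Suc x) * d (Suc x) * (u (of_nat x + 1) - u (of_nat x)) * v (of_nat x))"
    unfolding lessThan_Suc_atMost[symmetric] sum.lessThan_Suc using bN wb by simp
  have s2: "(\<Sum>x\<le>N. w x * d x * (u (of_nat x - 1) - u (of_nat x)) * v (of_nat x))
     = (\<Sum>x<N. w (Suc x) * d (Suc x) * (u (of_nat x) - u (of_nat x + 1)) * v (of_nat x + 1))"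
    unfolding lessThan_Suc_atMost[symmetric] sum.lessThan_Suc_shift using d0 by (simp add: add.commute)
  show ?thesis unfolding split s1 s2
    by (simp add: sum.distrib[symmetric] sum_negf[symmetric] algebra_simps)
qed

definition Wt :: "nat \<Rightarrow> complex \<Rightarrow> complex \<Rightarrow> complex \<Rightarrow> nat \<Rightarrow> complex" where
  "Wt x c1 c2 c3 N = Lambda x c1 c2 N * pochhammer (of_nat N + 2 + c1 + c2 + c3) x / pochhammer (- c3 - of_nat N) x"

lemma choose_Suc_of: "x < N \<Longrightarrow> (of_nat (N choose Suc x) :: complex) = of_nat (N choose x) * (of_nat N - of_nat x) / (of_nat x + 1)"
proof -
  assume "x < N"
  have "Suc x * (N choose Suc x) = (N - x) * (N choose x)"
    using binomial_absorption[of x N] binomial_absorb_comp[of N x] by simp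
  then have "(of_nat (Suc x) :: complex) * of_nat (N choose Suc x) = of_nat (N - x) * of_nat (N choose x)"
    by (metis of_nat_mult)
  then have "(of_nat x + 1 :: complex) * of_nat (N choose Suc x) = (of_nat N - of_nat x) * of_nat (N choose x)"
    using \<open>x < N\<close> by (simp add: of_nat_diff add.commute)
  moreover have "(of_nat x + 1 :: complex) \<noteq> 0" by (metis of_nat_Suc of_nat_eq_0_iff add.commute nat.distinct(1))
  ultimately show ?thesis by (simp add: field_simps)
qed

lemma poch_shift1: "(z + 1 :: complex) = w \<Longrightarrow> z \<noteq> 0 \<Longrightarrow> pochhammer w n = pochhammer z n * (z + of_nat n) / z"
proof -
  assume w: "z + 1 = w" and z: "z \<noteq> 0"
  have "z * pochhammer w n = pochhammer z n * (z + of_nat n)"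
    using pochhammer_rec[of z n] pochhammer_Suc[of z n] w by simp
  then show ?thesis using z by (simp add: field_simps)
qed

lemma ratio7:
  fixes sg C k y e e' P2 p P1 q Q t r Uu u Vd v :: complex
  assumes "P1 \<noteq> 0" "Q \<noteq> 0" "Vd \<noteq> 0" "q \<noteq> 0" "r \<noteq> 0" "y \<noteq> 0" "v \<noteq> 0" "e \<noteq> 0" "t \<noteq> 0"
  shows "(-1) * sg * (C * k / y) * e' * (P2 * p) / ((P1 * q) * (Q * t / r)) * (Uu * u) / (Vd * v)
   = sg * C * e * P2 / (P1 * Q) * Uu / Vd * (-(k/y)) * (e'/e) * (p/q) * (r/t) * (u/v)"
  using assms by (simp add: field_simps)

lemma nz_of': "(z::complex) \<notin> \<int> \<Longrightarrow> w + z \<in> \<int> \<Longrightarrow> w \<noteq> 0"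
  by (metis add.left_neutral)

lemma poch_nz_of': "(z::complex) \<notin> \<int> \<Longrightarrow> w + z \<in> \<int> \<Longrightarrow> pochhammer w n \<noteq> 0"
  by (rule poch_nz_of[of "- z"]) (auto simp: minus_in_Ints_iff)

lemma gen_nz:
  assumes "gen c1 c2 c3"
  shows "\<And>w. w - c1 \<in> \<int> \<Longrightarrow> w \<noteq> 0" "\<And>w. w - c2 \<in> \<int> \<Longrightarrow> w \<noteq> 0" "\<And>w. w - c3 \<in> \<int> \<Longrightarrow> w \<noteq> 0"
    "\<And>w. w - (c1 + c2) \<in> \<int> \<Longrightarrow> w \<noteq> 0" "\<And>w. w - (c2 + c3) \<in> \<int> \<Longrightarrow> w \<noteq> 0"
    "\<And>w. w - (c1 + c2 + c3) \<in> \<int> \<Longrightarrow> w \<noteq> 0"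
    "\<And>w n. w - c1 \<in> \<int> \<Longrightarrow> pochhammer w n \<noteq> 0" "\<And>w n. w - c2 \<in> \<int> \<Longrightarrow> pochhammer w n \<noteq> 0"
    "\<And>w n. w - c3 \<in> \<int> \<Longrightarrow> pochhammer w n \<noteq> 0"
    "\<And>w n. w - (c1 + c2) \<in> \<int> \<Longrightarrow> pochhammer w n \<noteq> 0" "\<And>w n. w - (c2 + c3) \<in> \<int> \<Longrightarrow> pochhammer w n \<noteq> 0"
    "\<And>w n. w - (c1 + c2 + c3) \<in> \<int> \<Longrightarrow> pochhammer w n \<noteq> 0"
    "\<And>w. w + c1 \<in> \<int> \<Longrightarrow> w \<noteq> 0" "\<And>w. w + c2 \<in> \<int> \<Longrightarrow> w \<noteq> 0" "\<And>w. w + c3 \<in> \<int> \<Longrightarrow> w \<noteq> 0"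
    "\<And>w. w + (c1 + c2) \<in> \<int> \<Longrightarrow> w \<noteq> 0" "\<And>w. w + (c2 + c3) \<in> \<int> \<Longrightarrow> w \<noteq> 0"
    "\<And>w. w + (c1 + c2 + c3) \<in> \<int> \<Longrightarrow> w \<noteq> 0"
    "\<And>w n. w + c1 \<in> \<int> \<Longrightarrow> pochhammer w n \<noteq> 0" "\<And>w n. w + c2 \<in> \<int> \<Longrightarrow> pochhammer w n \<noteq> 0"
    "\<And>w n. w + c3 \<in> \<int> \<Longrightarrow> pochhammer w n \<noteq> 0"
    "\<And>w n. w + (c1 + c2) \<in> \<int> \<Longrightarrow> pochhammer w n \<noteq> 0" "\<And>w n. w + (c2 + c3) \<in> \<int> \<Longrightarrow> pochhammer w n \<noteq> 0"
    "\<And>w n. w + (c1 + c2 + c3) \<in> \<int> \<Longrightarrow> pochhammer w n \<noteq> 0"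
proof -
  from assms have h: "c1 \<notin> \<int>" "c2 \<notin> \<int>" "c3 \<notin> \<int>" "c1 + c2 \<notin> \<int>" "c2 + c3 \<notin> \<int>" "c1 + c2 + c3 \<notin> \<int>"
    by (simp_all add: gen_def)
  show "\<And>w. w - c1 \<in> \<int> \<Longrightarrow> w \<noteq> 0" by (rule nz_of[OF h(1)])
  show "\<And>w. w - c2 \<in> \<int> \<Longrightarrow> w \<noteq> 0" by (rule nz_of[OF h(2)])
  show "\<And>w. w - c3 \<in> \<int> \<Longrightarrow> w \<noteq> 0" by (rule nz_of[OF h(3)])
  show "\<And>w. w - (c1 + c2) \<in> \<int> \<Longrightarrow> w \<noteq> 0" by (rule nz_of[OF h(4)])
  show "\<And>w. w - (c2 + c3) \<in> \<int> \<Longrightarrow> w \<noteq> 0" by (rule nz_of[OF h(5)])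
  show "\<And>w. w - (c1 + c2 + c3) \<in> \<int> \<Longrightarrow> w \<noteq> 0" by (rule nz_of[OF h(6)])
  show "\<And>w n. w - c1 \<in> \<int> \<Longrightarrow> pochhammer w n \<noteq> 0" by (rule poch_nz_of[OF h(1)])
  show "\<And>w n. w - c2 \<in> \<int> \<Longrightarrow> pochhammer w n \<noteq> 0" by (rule poch_nz_of[OF h(2)])
  show "\<And>w n. w - c3 \<in> \<int> \<Longrightarrow> pochhammer w n \<noteq> 0" by (rule poch_nz_of[OF h(3)])
  show "\<And>w n. w - (c1 + c2) \<in> \<int> \<Longrightarrow> pochhammer w n \<noteq> 0" by (rule poch_nz_of[OF h(4)])
  show "\<And>w n. w - (c2 + c3) \<in> \<int> \<Longrightarrow> pochhammer w n \<noteq> 0" by (rule poch_nz_of[OF h(5)])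
  show "\<And>w n. w - (c1 + c2 + c3) \<in> \<int> \<Longrightarrow> pochhammer w n \<noteq> 0" by (rule poch_nz_of[OF h(6)])
  show "\<And>w. w + c1 \<in> \<int> \<Longrightarrow> w \<noteq> 0" by (rule nz_of'[OF h(1)])
  show "\<And>w. w + c2 \<in> \<int> \<Longrightarrow> w \<noteq> 0" by (rule nz_of'[OF h(2)])
  show "\<And>w. w + c3 \<in> \<int> \<Longrightarrow> w \<noteq> 0" by (rule nz_of'[OF h(3)])
  show "\<And>w. w + (c1 + c2) \<in> \<int> \<Longrightarrow> w \<noteq> 0" by (rule nz_of'[OF h(4)])
  show "\<And>w. w + (c2 + c3) \<in> \<int> \<Longrightarrow> w \<noteq> 0" by (rule nz_of'[OF h(5)])
  show "\<And>w. w + (c1 + c2 + c3) \<in> \<int> \<Longrightarrow> w \<noteq> 0" by (rule nz_of'[OF h(6)])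
  show "\<And>w n. w + c1 \<in> \<int> \<Longrightarrow> pochhammer w n \<noteq> 0" by (rule poch_nz_of'[OF h(1)])
  show "\<And>w n. w + c2 \<in> \<int> \<Longrightarrow> pochhammer w n \<noteq> 0" by (rule poch_nz_of'[OF h(2)])
  show "\<And>w n. w + c3 \<in> \<int> \<Longrightarrow> pochhammer w n \<noteq> 0" by (rule poch_nz_of'[OF h(3)])
  show "\<And>w n. w + (c1 + c2) \<in> \<int> \<Longrightarrow> pochhammer w n \<noteq> 0" by (rule poch_nz_of'[OF h(4)])
  show "\<And>w n. w + (c2 + c3) \<in> \<int> \<Longrightarrow> pochhammer w n \<noteq> 0" by (rule poch_nz_of'[OF h(5)])
  show "\<And>w n. w + (c1 + c2 + c3) \<in> \<int> \<Longrightarrow> pochhammer w n \<noteq> 0" by (rule poch_nz_of'[OF h(6)])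
qed

lemma Wt_Suc:
  assumes g: "gen c1 c2 c3" and xN: "x < N"
  shows "Wt (Suc x) c1 c2 c3 N = Wt x c1 c2 c3 N * (-((of_nat N - of_nat x) / (of_nat x + 1)))
    * ((2 * of_nat (Suc x) + c1 + c2 + 1) / (2 * of_nat x + c1 + c2 + 1)) * ((c2 + 1 + of_nat x) / (c1 + 1 + of_nat x))
    * ((of_nat x + c1 + c2 + 1) / (of_nat x + c1 + c2 + 1 + of_nat (N + 1)))
    * ((of_nat N + 2 + c1 + c2 + c3 + of_nat x) / (- c3 - of_nat N + of_nat x))"
proof -
  note nz = gen_nz[OF g]
  have r0: "of_nat x + c1 + c2 + 1 \<noteq> 0" by (rule nz(4)) (simp add: algebra_simps)
  have Q': "pochhammer (of_nat (Suc x) + c1 + c2 + 1) (N + 1) = pochhammer (of_nat x + c1 + c2 + 1) (N + 1) * (of_nat x + c1 + c2 + 1 + of_nat (N + 1)) / (of_nat x + c1 + c2 + 1)"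
    by (rule poch_shift1[OF _ r0]) (simp add: algebra_simps)
  have "Wt (Suc x) c1 c2 c3 N = (-1) * (-1) ^ x * (of_nat (N choose x) * (of_nat N - of_nat x) / (of_nat x + 1)) * (2 * of_nat (Suc x) + c1 + c2 + 1)
     * (pochhammer (c2 + 1) x * (c2 + 1 + of_nat x)) / ((pochhammer (c1 + 1) x * (c1 + 1 + of_nat x)) *
      (pochhammer (of_nat x + c1 + c2 + 1) (N + 1) * (of_nat x + c1 + c2 + 1 + of_nat (N + 1)) / (of_nat x + c1 + c2 + 1)))
     * (pochhammer (of_nat N + 2 + c1 + c2 + c3) x * (of_nat N + 2 + c1 + c2 + c3 + of_nat x))
     / (pochhammer (- c3 - of_nat N) x * (- c3 - of_nat N + of_nat x))"
    unfolding Wt_def Lambda_def choose_Suc_of[OF xN] Q' power_Suc pochhammer_Suc ..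
  also have "\<dots> = Wt x c1 c2 c3 N * (-((of_nat N - of_nat x) / (of_nat x + 1)))
    * ((2 * of_nat (Suc x) + c1 + c2 + 1) / (2 * of_nat x + c1 + c2 + 1)) * ((c2 + 1 + of_nat x) / (c1 + 1 + of_nat x))
    * ((of_nat x + c1 + c2 + 1) / (of_nat x + c1 + c2 + 1 + of_nat (N + 1)))
    * ((of_nat N + 2 + c1 + c2 + c3 + of_nat x) / (- c3 - of_nat N + of_nat x))"
    unfolding Wt_def Lambda_def
    apply (rule ratio7)
    apply (rule nz(7); simp)
    apply (rule nz(10); simp add: algebra_simps)
    apply (rule nz(21); simp add: algebra_simps)
    apply (rule nz(1); simp add: algebra_simps)
    apply (rule r0)
    apply (metis of_nat_Suc of_nat_eq_0_iff add.commute nat.distinct(1))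
    apply (rule nz(15); simp add: algebra_simps)
    apply (rule nz(4); simp add: algebra_simps)
    apply (rule nz(4); simp add: algebra_simps)
    done
  finally show ?thesis .
qed


lemma cong4: "a1 = b1 \<Longrightarrow> a2 = b2 \<Longrightarrow> a3 = b3 \<Longrightarrow> a4 = b4 \<Longrightarrow> d1 = f1 \<Longrightarrow> d2 = f2 \<Longrightarrow>
   (a1::complex) * a2 * a3 * a4 / (d1 * d2) = b1 * b2 * b3 * b4 / (f1 * f2)"
  by simp

lemma WB:
  assumes g: "gen c1 c2 c3" and xN: "x < N"
  shows "Wt x c1 c2 c3 N * Bf (of_nat x) c1 c2 c3 N = Wt (Suc x) c1 c2 c3 N * Df (of_nat (Suc x)) c1 c2 c3 N"
proof -
  note nz = gen_nz[OF g]
  define k where "k = (of_nat N - of_nat x :: complex)"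
  define y where "y = (of_nat x + 1 :: complex)"
  define e where "e = 2 * of_nat x + c1 + c2 + 1"
  define e' where "e' = 2 * of_nat (Suc x) + c1 + c2 + 1"
  define e1 where "e1 = 2 * of_nat x + c1 + c2 + 2"
  define p where "p = c2 + 1 + of_nat x"
  define q where "q = c1 + 1 + of_nat x"
  define r where "r = of_nat x + c1 + c2 + 1"
  define t where "t = of_nat x + c1 + c2 + 1 + of_nat (N + 1)"
  define u where "u = of_nat N + 2 + c1 + c2 + c3 + of_nat x"
  define v where "v = - c3 - of_nat N + of_nat x"
  have y0: "y \<noteq> 0" unfolding y_def by (metis of_nat_Suc of_nat_eq_0_iff add.commute nat.distinct(1))
  have e0: "e \<noteq> 0" unfolding e_def by (rule nz(4)) (simp add: algebra_simps)
  have e'0: "e' \<noteq> 0" unfolding e'_def by (rule nz(4)) (simp add: algebra_simps)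
  have e10: "e1 \<noteq> 0" unfolding e1_def by (rule nz(4)) (simp add: algebra_simps)
  have q0: "q \<noteq> 0" unfolding q_def by (rule nz(1)) (simp add: algebra_simps)
  have t0: "t \<noteq> 0" unfolding t_def by (rule nz(4)) (simp add: algebra_simps)
  have v0: "v \<noteq> 0" unfolding v_def by (rule nz(15)) (simp add: algebra_simps)
  have D: "Df (of_nat (Suc x)) c1 c2 c3 N = y * q * v * t / (e1 * e')"
    unfolding Df_def by (rule cong4) (simp_all add: y_def q_def v_def t_def e1_def e'_def algebra_simps)
  have B: "Bf (of_nat x) c1 c2 c3 N = p * u * (- k) * r / (e * e1)"
    unfolding Bf_def by (rule cong4) (simp_all add: p_def u_def k_def r_def e_def e1_def algebra_simps)
  have W: "Wt (Suc x) c1 c2 c3 N = Wt x c1 c2 c3 N * (- (k / y)) * (e' / e) * (p / q) * (r / t) * (u / v)"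
    unfolding Wt_Suc[OF g xN] k_def y_def e'_def e_def p_def q_def r_def t_def u_def v_def ..
  show ?thesis unfolding D B W using y0 e0 e'0 e10 q0 t0 v0 by (simp add: field_simps)
qed

lemma orth_Fz:
  assumes g: "gen c1 c2 c3" and nN: "n \<le> N" and mN: "m \<le> N" and nm: "n \<noteq> m"
  shows "(\<Sum>x\<le>N. Wt x c1 c2 c3 N * Fz n (of_nat x) c1 c2 c3 N * Fz m (of_nat x) c1 c2 c3 N) = 0"
proof -
  note nz = gen_nz[OF g]
  define U where "U = (\<lambda>w. Fz n w c1 c2 c3 N)"
  define V where "V = (\<lambda>w. Fz m w c1 c2 c3 N)"
  define ln where "ln = of_nat n * (of_nat n + c2 + c3 + 1)"
  define lm where "lm = of_nat m * (of_nat m + c2 + c3 + 1)"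
  have dd: "2 * of_nat x + c1 + c2 + 1 \<noteq> 0" "2 * of_nat x + c1 + c2 + 2 \<noteq> 0" "2 * of_nat x + c1 + c2 \<noteq> 0"
     "of_nat x + c1 + c2 + 1 \<noteq> 0" for x :: nat
    by (rule nz(4); simp add: algebra_simps)+
  have LU: "Lop U (of_nat x) c1 c2 c3 N = ln * U (of_nat x)" for x
    unfolding U_def ln_def by (rule diffeq_F[OF g nN dd])
  have LV: "Lop V (of_nat x) c1 c2 c3 N = lm * V (of_nat x)" for x
    unfolding V_def lm_def by (rule diffeq_F[OF g mN dd])
  have wb: "\<And>x. x < N \<Longrightarrow> Wt x c1 c2 c3 N * Bf (of_nat x) c1 c2 c3 N = Wt (Suc x) c1 c2 c3 N * Df (of_nat (Suc x)) c1 c2 c3 N"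
    by (rule WB[OF g])
  have bN: "Bf (of_nat N) c1 c2 c3 N = 0" by (simp add: Bf_def)
  have d0: "Df (of_nat 0) c1 c2 c3 N = 0" by (simp add: Df_def)
  have E1: "(\<Sum>x\<le>N. Wt x c1 c2 c3 N * Lop U (of_nat x) c1 c2 c3 N * V (of_nat x))
     = - (\<Sum>x<N. Wt (Suc x) c1 c2 c3 N * Df (of_nat (Suc x)) c1 c2 c3 N * (U (of_nat x + 1) - U (of_nat x)) * (V (of_nat x + 1) - V (of_nat x)))"
    unfolding Lop_def
    by (rule sbp[where w="\<lambda>x. Wt x c1 c2 c3 N" and b="\<lambda>x. Bf (of_nat x) c1 c2 c3 N" and d="\<lambda>x. Df (of_nat x) c1 c2 c3 N", OF wb bN d0])
  have E2: "(\<Sum>x\<le>N. Wt x c1 c2 c3 N * Lop V (of_nat x) c1 c2 c3 N * U (of_nat x))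
     = - (\<Sum>x<N. Wt (Suc x) c1 c2 c3 N * Df (of_nat (Suc x)) c1 c2 c3 N * (V (of_nat x + 1) - V (of_nat x)) * (U (of_nat x + 1) - U (of_nat x)))"
    unfolding Lop_def
    by (rule sbp[where w="\<lambda>x. Wt x c1 c2 c3 N" and b="\<lambda>x. Bf (of_nat x) c1 c2 c3 N" and d="\<lambda>x. Df (of_nat x) c1 c2 c3 N", OF wb bN d0])
  define P where "P = (\<Sum>x\<le>N. Wt x c1 c2 c3 N * U (of_nat x) * V (of_nat x))"
  have "ln * P = (\<Sum>x\<le>N. Wt x c1 c2 c3 N * Lop U (of_nat x) c1 c2 c3 N * V (of_nat x))"
    unfolding P_def LU sum_distrib_left by (rule sum.cong) (simp_all add: algebra_simps)
  also have "\<dots> = (\<Sum>x\<le>N. Wt x c1 c2 c3 N * Lop V (of_nat x) c1 c2 c3 N * U (of_nat x))"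
    unfolding E1 E2 by (simp add: algebra_simps)
  also have "\<dots> = lm * P"
    unfolding P_def LV sum_distrib_left by (rule sum.cong) (simp_all add: algebra_simps)
  finally have "(ln - lm) * P = 0" by (simp add: algebra_simps)
  moreover have "ln - lm \<noteq> 0"
  proof
    assume "ln - lm = 0"
    then have "(of_nat n - of_nat m) * (of_nat n + of_nat m + c2 + c3 + 1) = (0::complex)"
      unfolding ln_def lm_def by algebra
    moreover have "(of_nat n - of_nat m :: complex) \<noteq> 0" using nm by simp
    moreover have "of_nat n + of_nat m + c2 + c3 + 1 \<noteq> 0" by (rule nz(5)) (simp add: algebra_simps)
    ultimately show False by simp
  qed
  ultimately have "P = 0" by simp
  then show ?thesis unfolding P_def U_def V_def .
qed

lemma orth:
  assumes g: "gen c1 c2 c3" and nN: "n \<le> N" and mN: "m \<le> N" and nm: "n \<noteq> m"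
  shows "(\<Sum>x\<le>N. Wt x c1 c2 c3 N * F43 n x c1 c2 c3 N * F43 m x c1 c2 c3 N) = 0"
  unfolding F43_Fz by (rule orth_Fz[OF assms])

definition Ssum :: "complex \<Rightarrow> complex \<Rightarrow> complex \<Rightarrow> nat \<Rightarrow> complex" where
  "Ssum c1 c2 c3 N = (\<Sum>x\<le>N. Wt x c1 c2 c3 N)"

definition Scl :: "complex \<Rightarrow> complex \<Rightarrow> complex \<Rightarrow> nat \<Rightarrow> complex" where
  "Scl c1 c2 c3 N = pochhammer (- of_nat N - 1 - c2 - c3) N / (pochhammer (c1 + 1) N * pochhammer (- c3 - of_nat N) N)"

lemma gen_shift: "gen c1 c2 c3 \<Longrightarrow> gen (c1 + 1) (c2 + 1) c3"
  unfolding gen_def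
  by (auto dest: nonint_shift[where w="c1 + 1"] nonint_shift[where w="c2 + 1"] nonint_shift[where w="c1 + 1 + (c2 + 1)"]
    nonint_shift[where w="c2 + 1 + c3"] nonint_shift[where w="c1 + 1 + (c2 + 1) + c3"] simp: algebra_simps)

lemma ratio_shift:
  fixes sg C N1 y e c2p P2 c1p P1 r Q u0 U v0 V :: complex
  assumes "y \<noteq> 0" "r \<noteq> 0" "c1p \<noteq> 0" "v0 \<noteq> 0" "P1 \<noteq> 0" "Q \<noteq> 0" "V \<noteq> 0"
  shows "(-1) * sg * (N1 * C / y) * e * (c2p * P2) / ((c1p * P1) * (r * Q)) * (u0 * U) / (v0 * V) * (- y * r)
    = N1 * c2p * u0 / (c1p * v0) * (sg * C * e * P2 / (P1 * Q) * U / V)"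
  using assms by (simp add: field_simps)

lemma Wt_shift:
  assumes g: "gen c1 c2 c3"
  shows "Wt (Suc x) c1 c2 c3 (Suc N) * fz 1 (of_nat (Suc x)) c1 c2 =
    (of_nat N + 1) * (c2 + 1) * (of_nat N + 3 + c1 + c2 + c3) / ((c1 + 1) * (- c3 - of_nat N - 1)) * Wt x (c1 + 1) (c2 + 1) c3 N"
proof -
  note nz = gen_nz[OF g]
  have h1: "(of_nat (Suc N choose Suc x) :: complex) = (of_nat N + 1) * of_nat (N choose x) / (of_nat x + 1)"
  proof -
    have "(of_nat (Suc x) :: complex) * of_nat (Suc N choose Suc x) = of_nat (Suc N) * of_nat (N choose x)"
      by (metis Suc_times_binomial of_nat_mult)
    moreover have "(of_nat x + 1 :: complex) \<noteq> 0" by (metis of_nat_Suc of_nat_eq_0_iff add.commute nat.distinct(1))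
    ultimately show ?thesis by (simp add: field_simps)
  qed
  have h2: "(2 * of_nat (Suc x) + c1 + c2 + 1 :: complex) = 2 * of_nat x + (c1 + 1) + (c2 + 1) + 1"
    by (simp add: algebra_simps)
  have h3: "pochhammer (c2 + 1) (Suc x) = (c2 + 1) * pochhammer (c2 + 1 + 1) x"
    by (rule pochhammer_rec)
  have h4: "pochhammer (c1 + 1) (Suc x) = (c1 + 1) * pochhammer (c1 + 1 + 1) x"
    by (rule pochhammer_rec)
  have h5: "pochhammer (of_nat (Suc x) + c1 + c2 + 1) (Suc N + 1) = (of_nat (Suc x) + c1 + c2 + 1) * pochhammer (of_nat x + (c1 + 1) + (c2 + 1) + 1) (N + 1)"
  proof -
    have a1: "of_nat (Suc x) + c1 + c2 + 1 + 1 = of_nat x + (c1 + 1) + (c2 + 1) + (1::complex)" by (simp add: algebra_simps)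
    have e: "Suc N + 1 = Suc (N + 1)" by simp
    show ?thesis unfolding e pochhammer_rec a1 by (rule refl)
  qed
  have h6: "pochhammer (of_nat (Suc N) + 2 + c1 + c2 + c3) (Suc x) = (of_nat (Suc N) + 2 + c1 + c2 + c3) * pochhammer (of_nat N + 2 + (c1 + 1) + (c2 + 1) + c3) x"
  proof -
    have a1: "of_nat (Suc N) + 2 + c1 + c2 + c3 + 1 = of_nat N + 2 + (c1 + 1) + (c2 + 1) + c3" by (simp add: algebra_simps)
    show ?thesis unfolding pochhammer_rec a1 by (rule refl)
  qed
  have h7: "pochhammer (- c3 - of_nat (Suc N)) (Suc x) = (- c3 - of_nat (Suc N)) * pochhammer (- c3 - of_nat N) x"
  proof -
    have a1: "- c3 - of_nat (Suc N) + 1 = - c3 - of_nat N" by (simp add: algebra_simps)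
    show ?thesis unfolding pochhammer_rec a1 by (rule refl)
  qed
  have h8: "fz 1 (of_nat (Suc x)) c1 c2 = - (of_nat x + 1) * (of_nat (Suc x) + c1 + c2 + 1)"
    by (simp add: fz_def algebra_simps)
  have "Wt (Suc x) c1 c2 c3 (Suc N) * fz 1 (of_nat (Suc x)) c1 c2 =
    (-1) * (-1) ^ x * ((of_nat N + 1) * of_nat (N choose x) / (of_nat x + 1)) * (2 * of_nat x + (c1 + 1) + (c2 + 1) + 1)
    * ((c2 + 1) * pochhammer (c2 + 1 + 1) x) / (((c1 + 1) * pochhammer (c1 + 1 + 1) x) * ((of_nat (Suc x) + c1 + c2 + 1) * pochhammer (of_nat x + (c1 + 1) + (c2 + 1) + 1) (N + 1)))
    * ((of_nat (Suc N) + 2 + c1 + c2 + c3) * pochhammer (of_nat N + 2 + (c1 + 1) + (c2 + 1) + c3) x) / ((- c3 - of_nat (Suc N)) * pochhammer (- c3 - of_nat N) x)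
    * (- (of_nat x + 1) * (of_nat (Suc x) + c1 + c2 + 1))"
    unfolding Wt_def Lambda_def h1 h2 h3 h4 h5 h6 h7 h8 power_Suc by (rule refl)
  also have "\<dots> = (of_nat N + 1) * (c2 + 1) * (of_nat (Suc N) + 2 + c1 + c2 + c3) / ((c1 + 1) * (- c3 - of_nat (Suc N))) * Wt x (c1 + 1) (c2 + 1) c3 N"
    unfolding Wt_def Lambda_def
    apply (rule ratio_shift)
    apply (metis of_nat_Suc of_nat_eq_0_iff add.commute nat.distinct(1))
    apply (rule nz(4); simp add: algebra_simps)
    apply (rule nz(1); simp add: algebra_simps)
    apply (rule nz(15); simp add: algebra_simps)
    apply (rule nz(7); simp add: algebra_simps)
    apply (rule nz(10); simp add: algebra_simps)
    apply (rule nz(21); simp add: algebra_simps)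
    done
  finally show ?thesis by (simp add: algebra_simps)
qed


lemma Fz_0: "Fz 0 z c1 c2 c3 N = 1"
  by (simp add: Fz_def Acf_def fz_def)

lemma Fz_1: "Fz 1 z c1 c2 c3 N = 1 + Acf 1 1 c1 c2 c3 N * fz 1 z c1 c2"
  by (simp add: Fz_def Acf_def fz_def)

lemma S_closed: "gen c1 c2 c3 \<Longrightarrow> Ssum c1 c2 c3 N = Scl c1 c2 c3 N"
proof (induction N arbitrary: c1 c2)
  case 0
  note nz = gen_nz[OF 0]
  have "c1 + c2 + 1 \<noteq> 0" by (rule nz(4)) simp
  then show ?case by (simp add: Ssum_def Scl_def Wt_def Lambda_def)
next
  case (Suc N)
  note g = Suc.prems
  note nz = gen_nz[OF g]
  have g': "gen (c1 + 1) (c2 + 1) c3" by (rule gen_shift[OF g])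
  have IH: "Ssum (c1 + 1) (c2 + 1) c3 N = Scl (c1 + 1) (c2 + 1) c3 N" by (rule Suc.IH[OF g'])
  define A1 where "A1 = Acf 1 1 c1 c2 c3 (Suc N)"
  define ka where "ka = (of_nat N + 1) * (c2 + 1) * (of_nat N + 3 + c1 + c2 + c3) / ((c1 + 1) * (- c3 - of_nat N - 1))"
  have o: "(\<Sum>x\<le>Suc N. Wt x c1 c2 c3 (Suc N) * Fz 1 (of_nat x) c1 c2 c3 (Suc N) * Fz 0 (of_nat x) c1 c2 c3 (Suc N)) = 0"
    by (rule orth_Fz[OF g]) simp_all
  have sh: "(\<Sum>x\<le>Suc N. Wt x c1 c2 c3 (Suc N) * fz 1 (of_nat x) c1 c2) = ka * Ssum (c1 + 1) (c2 + 1) c3 N"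
    unfolding sum.atMost_Suc_shift Wt_shift[OF g] Ssum_def ka_def sum_distrib_left
    by (simp add: fz_def)
  have "0 = Ssum c1 c2 c3 (Suc N) + A1 * (\<Sum>x\<le>Suc N. Wt x c1 c2 c3 (Suc N) * fz 1 (of_nat x) c1 c2)"
    unfolding o[symmetric] Fz_0 Fz_1 Ssum_def A1_def sum_distrib_left sum.distrib[symmetric]
    by (rule sum.cong) (simp_all add: algebra_simps)
  then have S: "Ssum c1 c2 c3 (Suc N) = - A1 * ka * Scl (c1 + 1) (c2 + 1) c3 N"
    unfolding sh IH by (simp add: algebra_simps eq_neg_iff_add_eq_0)
  define X where "X = pochhammer (- of_nat N - 1 - (c2 + 1) - c3) N"
  define Y where "Y = pochhammer (c1 + 1 + 1) N"
  define Z where "Z = pochhammer (- c3 - of_nat N) N"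
  have Y0: "Y \<noteq> 0" unfolding Y_def by (rule nz(7)) simp
  have Z0: "Z \<noteq> 0" unfolding Z_def by (rule nz(21)) simp
  have p1: "pochhammer (- of_nat (Suc N) - 1 - c2 - c3) (Suc N) = X * (- 2 - c2 - c3)"
  proof -
    have a: "- of_nat (Suc N) - 1 - c2 - c3 = - of_nat N - 1 - (c2 + 1) - (c3::complex)" by (simp add: algebra_simps)
    show ?thesis unfolding a pochhammer_Suc X_def by (simp add: algebra_simps)
  qed
  have p2: "pochhammer (c1 + 1) (Suc N) = (c1 + 1) * Y" unfolding Y_def by (rule pochhammer_rec)
  have p3: "pochhammer (- c3 - of_nat (Suc N)) (Suc N) = (- c3 - of_nat (Suc N)) * Z"
  proof -
    have a1: "- c3 - of_nat (Suc N) + 1 = - c3 - of_nat N" by (simp add: algebra_simps)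
    show ?thesis unfolding pochhammer_rec a1 Z_def by (rule refl)
  qed
  have A1: "A1 = (-1) * (1 + c2 + c3 + 1) / ((c2 + 1) * (of_nat (Suc N) + 2 + c1 + c2 + c3) * (- of_nat (Suc N)) * 1)"
    unfolding A1_def Acf_def by simp
  have n1: "c1 + 1 \<noteq> 0" by (rule nz(1)) simp
  have n2: "c2 + 1 \<noteq> 0" by (rule nz(2)) simp
  have n3: "of_nat (Suc N) + 2 + c1 + c2 + c3 \<noteq> 0" by (rule nz(6)) (simp add: algebra_simps)
  have n4: "- c3 - of_nat (Suc N) \<noteq> 0" by (rule nz(15)) simp
  have n5: "(of_nat (Suc N) :: complex) \<noteq> 0" by (metis of_nat_eq_0_iff nat.distinct(1))
  have n7: "of_nat N + 3 + c1 + c2 + c3 \<noteq> 0" by (rule nz(6)) (simp add: algebra_simps)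
  have n8: "- c3 - of_nat N - 1 \<noteq> 0" by (rule nz(15)) (simp add: algebra_simps)
  have n6: "(of_nat N + 1 :: complex) \<noteq> 0" by (metis of_nat_Suc of_nat_eq_0_iff add.commute nat.distinct(1))
  have n9: "1 + of_nat N \<noteq> (0::complex)" using n6 by (simp add: add.commute)
  have "Scl c1 c2 c3 (Suc N) = X * (- 2 - c2 - c3) / ((c1 + 1) * Y * ((- c3 - of_nat (Suc N)) * Z))"
    unfolding Scl_def p1 p2 p3 ..
  also have "\<dots> = - A1 * ka * (X / (Y * Z))"
  proof -
    have r1: "(- 2 - c2 - c3) = - (1 + c2 + c3 + 1)" by (simp add: algebra_simps)
    have r2: "of_nat (Suc N) + 2 + c1 + c2 + c3 = of_nat N + 3 + c1 + c2 + c3" by (simp add: algebra_simps)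
    have r3: "(of_nat (Suc N) :: complex) = of_nat N + 1" by simp
    have r4: "- c3 - of_nat (Suc N) = - c3 - of_nat N - 1" by (simp add: algebra_simps)
    have abs: "X * (- a) / (b1 * Y * (d * Z)) = - ((-1) * a / (b2 * m * (- s) * 1)) * (s * b2 * m / (b1 * d)) * (X / (Y * Z))"
      if "b1 \<noteq> 0" "b2 \<noteq> 0" "m \<noteq> 0" "s \<noteq> 0" "d \<noteq> 0" "Y \<noteq> 0" "Z \<noteq> 0" for a b1 b2 m s d :: complex
      using that by (simp add: field_simps)
    show ?thesis unfolding A1 ka_def r1 r2 r4 unfolding r3
      by (rule abs[OF n1 n2 n7 n6 n8 Y0 Z0])
  qed
  also have "X / (Y * Z) = Scl (c1 + 1) (c2 + 1) c3 N" unfolding Scl_def X_def Y_def Z_def ..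
  finally show ?case unfolding S by (rule sym)
qed

lemma F43_sym: "F43 n x c1 c2 c3 N = F43 x n c3 c2 c1 N"
  unfolding F43_def min.commute[of n x]
  by (rule sum.cong) (simp_all add: ac_simps)

lemma gen_swap: "gen c1 c2 c3 \<Longrightarrow> gen c3 c2 c1"
  unfolding gen_def by (simp add: ac_simps)

lemma F43_0: "F43 0 x c1 c2 c3 N = 1"
  by (simp add: F43_def)

lemma F43_0': "F43 n 0 c1 c2 c3 N = 1"
  by (simp add: F43_def)

lemma Omega_dual:
  assumes g: "gen c1 c2 c3" and nN: "n \<le> N"
  shows "Omega n c1 c2 c3 N = pochhammer (c1 + 1) N * Wt n c3 c2 c1 N"
proof -
  note nz = gen_nz[OF g]
  define A where "A = pochhammer (c1 + 1) (N - n)"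
  define B where "B = pochhammer (c1 + 1 + of_nat (N - n)) n"
  define sg where "sg = ((-1) ^ n :: complex)"
  have k1: "pochhammer (c1 + 1) N = A * B"
    unfolding A_def B_def using pochhammer_product[of "N - n" N "c1 + 1"] nN by simp
  have k2: "pochhammer (- c1 - of_nat N) n = sg * B"
  proof -
    have "pochhammer (- (c1 + of_nat N)) n = (-1) ^ n * pochhammer (c1 + of_nat N - of_nat n + 1) n"
      by (rule pochhammer_minus)
    moreover have "c1 + of_nat N - of_nat n + 1 = c1 + 1 + of_nat (N - n)" using nN by (simp add: of_nat_diff)
    ultimately show ?thesis unfolding sg_def B_def by (simp add: algebra_simps)
  qed
  have B0: "B \<noteq> 0" unfolding B_def by (rule nz(7)) simp
  have s0: "sg \<noteq> 0" unfolding sg_def by simp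
  have a1: "pochhammer (of_nat N + 2 + c3 + c2 + c1) n = pochhammer (of_nat N + 2 + c1 + c2 + c3) n" by (simp add: ac_simps)
  have a2: "pochhammer (of_nat n + c3 + c2 + 1) (N + 1) = pochhammer (c2 + c3 + of_nat n + 1) (N + 1)" by (simp add: ac_simps)
  have a3: "(2 * of_nat n + c3 + c2 + 1) = (2 * of_nat n + c2 + c3 + 1)" by (simp add: ac_simps)
  have abs: "C * e * P2 * Pn * A / (P3 * Q) = (A * B) * (sg * C * e * P2 / (P3 * Q) * Pn / (sg * B))"
    for C e P2 Pn P3 Q :: complex
    using B0 s0 by (simp add: field_simps)
  show ?thesis unfolding Omega_def Wt_def Lambda_def k1 k2 a1 a2 a3 sg_def[symmetric] A_def[symmetric]
    by (rule abs)
qed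

lemma E1:
  assumes g: "gen c1 c2 c3"
  shows "Omega 0 c1 c2 c3 N * Scl c1 c2 c3 N * pochhammer (c3 + 1) N = 1"
proof -
  note nz = gen_nz[OF g]
  define P where "P = pochhammer (c2 + c3 + 2) N"
  define R where "R = pochhammer (c1 + 1) N"
  define T where "T = pochhammer (c3 + 1) N"
  define sg where "sg = ((-1) ^ N :: complex)"
  have P0: "P \<noteq> 0" unfolding P_def by (rule nz(11)) simp
  have R0: "R \<noteq> 0" unfolding R_def by (rule nz(7)) simp
  have T0: "T \<noteq> 0" unfolding T_def by (rule nz(9)) simp
  have s0: "sg \<noteq> 0" unfolding sg_def by simp
  have e0: "c2 + c3 + 1 \<noteq> 0" by (rule nz(5)) simp
  have o1: "Omega 0 c1 c2 c3 N = (c2 + c3 + 1) * R / ((c2 + c3 + 1) * P)"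
    unfolding Omega_def R_def P_def by (simp add: pochhammer_rec algebra_simps)
  have o: "Omega 0 c1 c2 c3 N = R / P" unfolding o1 using e0 by simp
  have k1: "pochhammer (- of_nat N - 1 - c2 - c3) N = sg * P"
  proof -
    have a: "- (of_nat N + 1 + c2 + c3) = - of_nat N - 1 - c2 - c3" by (simp add: algebra_simps)
    have b: "of_nat N + 1 + c2 + c3 - of_nat N + 1 = c2 + c3 + 2" by (simp add: algebra_simps)
    show ?thesis using pochhammer_minus[of "of_nat N + 1 + c2 + c3" N] unfolding a b sg_def P_def .
  qed
  have k2: "pochhammer (- c3 - of_nat N) N = sg * T"
  proof -
    have a: "- (c3 + of_nat N) = - c3 - of_nat N" by (simp add: algebra_simps)
    have b: "c3 + of_nat N - of_nat N + 1 = c3 + 1" by (simp add: algebra_simps)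
    show ?thesis using pochhammer_minus[of "c3 + of_nat N" N] unfolding a b sg_def T_def .
  qed
  show ?thesis unfolding o Scl_def k1 k2 R_def[symmetric] T_def[symmetric]
    using P0 R0 T0 s0 by (simp add: field_simps)
qed


lemma orthV:
  assumes g: "gen c1 c2 c3" and xN: "x \<le> N" and yN: "y \<le> N" and xy: "x \<noteq> y"
  shows "(\<Sum>n\<le>N. Omega n c1 c2 c3 N * F43 n x c1 c2 c3 N * F43 n y c1 c2 c3 N) = 0"
proof -
  have "(\<Sum>n\<le>N. Omega n c1 c2 c3 N * F43 n x c1 c2 c3 N * F43 n y c1 c2 c3 N)
     = pochhammer (c1 + 1) N * (\<Sum>n\<le>N. Wt n c3 c2 c1 N * F43 x n c3 c2 c1 N * F43 y n c3 c2 c1 N)"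
    unfolding sum_distrib_left
    by (rule sum.cong) (simp_all add: Omega_dual[OF g] F43_sym[of _ x] F43_sym[of _ y] algebra_simps)
  also have "(\<Sum>n\<le>N. Wt n c3 c2 c1 N * F43 x n c3 c2 c1 N * F43 y n c3 c2 c1 N) = 0"
    by (rule orth[OF gen_swap[OF g] xN yN xy])
  finally show ?thesis by simp
qed

lemma norms:
  assumes g: "gen c1 c2 c3"
  shows "n \<le> N \<Longrightarrow> pochhammer (c3 + 1) N * Omega n c1 c2 c3 N * (\<Sum>x\<le>N. Wt x c1 c2 c3 N * F43 n x c1 c2 c3 N * F43 n x c1 c2 c3 N) = 1"
    and "x \<le> N \<Longrightarrow> pochhammer (c3 + 1) N * Wt x c1 c2 c3 N * (\<Sum>n\<le>N. Omega n c1 c2 c3 N * F43 n x c1 c2 c3 N * F43 n x c1 c2 c3 N) = 1"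
proof -
  define V where "V n = Omega n c1 c2 c3 N" for n
  define W where "W x = Wt x c1 c2 c3 N" for x
  define F where "F n x = F43 n x c1 c2 c3 N" for n x
  define D1 where "D1 n = (\<Sum>x\<le>N. W x * F n x * F n x)" for n
  define D2 where "D2 x = (\<Sum>n\<le>N. V n * F n x * F n x)" for x
  have F0: "F 0 x = 1" "F n 0 = 1" for n x unfolding F_def by (simp_all add: F43_0 F43_0')
  have inner1: "(\<Sum>m\<le>N. V m * F m x * F m 0) = (if x = 0 then D2 0 else 0)" if "x \<le> N" for x
  proof (cases "x = 0")
    case True then show ?thesis unfolding D2_def by simp
  next
    case False
    then show ?thesis unfolding V_def F_def using orthV[OF g that _ False] by simp
  qed
  have inner2: "(\<Sum>x\<le>N. W x * F n x * F m x) = (if m = n then D1 n else 0)" if "n \<le> N" "m \<le> N" for n m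
  proof (cases "m = n")
    case True then show ?thesis unfolding D1_def by simp
  next
    case False
    then show ?thesis unfolding W_def F_def using orth[OF g that(1) that(2)] by simp
  qed
  have inner3: "(\<Sum>n\<le>N. V n * F n x * F n y) = (if y = x then D2 x else 0)" if "x \<le> N" "y \<le> N" for x y
  proof (cases "y = x")
    case True then show ?thesis unfolding D2_def by simp
  next
    case False
    then show ?thesis unfolding V_def F_def using orthV[OF g that] by simp
  qed
  have key1: "V n * D1 n = W 0 * D2 0" if nN: "n \<le> N" for n
  proof -
    have "(\<Sum>x\<le>N. W x * F n x * (\<Sum>m\<le>N. V m * F m x * F m 0)) = (\<Sum>x\<le>N. if x = 0 then W x * F n x * D2 0 else 0)"
      by (rule sum.cong) (simp_all add: inner1)
    also have "\<dots> = W 0 * D2 0" by (simp add: sum.delta F0)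
    finally have a: "(\<Sum>x\<le>N. W x * F n x * (\<Sum>m\<le>N. V m * F m x * F m 0)) = W 0 * D2 0" .
    have "(\<Sum>x\<le>N. W x * F n x * (\<Sum>m\<le>N. V m * F m x * F m 0)) = (\<Sum>m\<le>N. V m * F m 0 * (\<Sum>x\<le>N. W x * F n x * F m x))"
      unfolding sum_distrib_left sum_distrib_right by (subst sum.swap) (simp add: algebra_simps)
    also have "\<dots> = (\<Sum>m\<le>N. if m = n then V m * F m 0 * D1 n else 0)"
      by (rule sum.cong) (simp_all add: inner2[OF nN])
    also have "\<dots> = V n * D1 n" using nN by (simp add: sum.delta F0)
    finally show ?thesis using a by simp
  qed
  have key2: "W x * D2 x = V 0 * D1 0" if xN: "x \<le> N" for x
  proof -
    have "(\<Sum>n\<le>N. V n * F n x * (\<Sum>y\<le>N. W y * F n y * F 0 y)) = (\<Sum>n\<le>N. if n = 0 then V n * F n x * D1 0 else 0)"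
      by (rule sum.cong) (simp_all add: inner2)
    also have "\<dots> = V 0 * D1 0" by (simp add: sum.delta F0)
    finally have a: "(\<Sum>n\<le>N. V n * F n x * (\<Sum>y\<le>N. W y * F n y * F 0 y)) = V 0 * D1 0" .
    have "(\<Sum>n\<le>N. V n * F n x * (\<Sum>y\<le>N. W y * F n y * F 0 y)) = (\<Sum>y\<le>N. W y * F 0 y * (\<Sum>n\<le>N. V n * F n x * F n y))"
      unfolding sum_distrib_left sum_distrib_right by (subst sum.swap) (simp add: algebra_simps)
    also have "\<dots> = (\<Sum>y\<le>N. if y = x then W y * F 0 y * D2 x else 0)"
      by (rule sum.cong) (simp_all add: inner3[OF xN])
    also have "\<dots> = W x * D2 x" using xN by (simp add: sum.delta F0)
    finally show ?thesis using a by simp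
  qed
  have D10: "D1 0 = Scl c1 c2 c3 N"
    unfolding D1_def F0 using S_closed[OF g] by (simp add: Ssum_def W_def)
  have E: "pochhammer (c3 + 1) N * (V 0 * D1 0) = 1"
    unfolding D10 V_def using E1[OF g, of N] by (simp add: algebra_simps)
  show "n \<le> N \<Longrightarrow> pochhammer (c3 + 1) N * Omega n c1 c2 c3 N * (\<Sum>x\<le>N. Wt x c1 c2 c3 N * F43 n x c1 c2 c3 N * F43 n x c1 c2 c3 N) = 1"
  proof -
    assume nN: "n \<le> N"
    have "V n * D1 n = V 0 * D1 0" using key1[OF nN] key1[of 0] by simp
    then show ?thesis using E unfolding V_def D1_def W_def F_def by (simp add: algebra_simps)
  qed
  show "x \<le> N \<Longrightarrow> pochhammer (c3 + 1) N * Wt x c1 c2 c3 N * (\<Sum>n\<le>N. Omega n c1 c2 c3 N * F43 n x c1 c2 c3 N * F43 n x c1 c2 c3 N) = 1"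
  proof -
    assume xN: "x \<le> N"
    show ?thesis using E key2[OF xN] unfolding V_def D2_def W_def F_def by (simp add: algebra_simps)
  qed
qed

lemma abs_P:
  fixes sx sj Cx CMj CNj CKx ex P2x P1x QK G ej P0j A3 P4j H Uu B3 :: complex
  assumes "P1x \<noteq> 0" "QK \<noteq> 0" "G \<noteq> 0" "P4j \<noteq> 0" "H \<noteq> 0" "Uu \<noteq> 0" "sx \<noteq> 0" "B3 \<noteq> 0"
    and "Cx * CMj = CNj * CKx" and "sx * sx = 1"
  shows "(sx * Cx * ex * P2x / (P1x * (QK * G))) * (CMj * ej * P0j * (sj * G) * A3 / (P4j * H))
    = (sj * CNj * ej * P0j / (P4j * (H * (sx * Uu)))) * (A3 * B3) * (sx * CKx * ex * P2x / (P1x * QK) * Uu / (sx * B3))"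
proof -
  have "(sx * Cx * ex * P2x / (P1x * (QK * G))) * (CMj * ej * P0j * (sj * G) * A3 / (P4j * H))
      = sx * sx * (Cx * CMj) * sj * ex * P2x * ej * P0j * A3 / (sx * P1x * QK * P4j * H)"
    using assms by (simp add: field_simps)
  also have "\<dots> = (CNj * CKx) * sj * ex * P2x * ej * P0j * A3 / (sx * P1x * QK * P4j * H)"
    using assms by simp
  also have "\<dots> = (sj * CNj * ej * P0j / (P4j * (H * (sx * Uu)))) * (A3 * B3) * (sx * CKx * ex * P2x / (P1x * QK) * Uu / (sx * B3))"
    using assms by (simp add: field_simps)
  finally show ?thesis .
qed

lemma choose_swap: "x + j \<le> N \<Longrightarrow> (of_nat (N choose x) * of_nat ((N - x) choose j) :: complex) = of_nat (N choose j) * of_nat ((N - j) choose x)"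
proof -
  assume h: "x + j \<le> N"
  have "(of_nat (N choose x) * of_nat ((N - x) choose j) :: complex) = fact N / (fact x * fact (N - x)) * (fact (N - x) / (fact j * fact (N - x - j)))"
    using h by (simp add: binomial_fact)
  also have "\<dots> = fact N / (fact x * fact j * fact (N - x - j))" by (simp add: field_simps)
  also have "\<dots> = fact N / (fact j * fact (N - j)) * (fact (N - j) / (fact x * fact (N - j - x)))"
    by (simp add: field_simps diff_commute)
  also have "\<dots> = of_nat (N choose j) * of_nat ((N - j) choose x)"
    using h by (simp add: binomial_fact)
  finally show ?thesis .
qed

lemma Pid:
  assumes sum: "c0 + c1 + c2 + c3 + c4 = - 2 * of_nat N - 3"
    and g1: "gen c1 c2 c3" and g2: "gen c4 c0 c3" and xj: "x + j \<le> N"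
  shows "Lambda x c1 c2 N * Omega j c3 c0 c4 (N - x) = Lambda j c4 c0 N * pochhammer (c3 + 1) (N - j) * Wt x c1 c2 c3 (N - j)"
proof -
  note nz1 = gen_nz[OF g1] and nz2 = gen_nz[OF g2]
  have c0: "c0 = - 2 * of_nat N - 3 - c1 - c2 - c3 - c4" using sum by (simp add: algebra_simps)
  have xN: "x \<le> N" and jN: "j \<le> N" using xj by auto
  define sx where "sx = ((-1) ^ x :: complex)"
  define sj where "sj = ((-1) ^ j :: complex)"
  define QK where "QK = pochhammer (of_nat x + c1 + c2 + 1) (N - j + 1)"
  define G where "G = pochhammer (of_nat x + c1 + c2 + 1 + of_nat (N - j + 1)) j"
  define A3 where "A3 = pochhammer (c3 + 1) (N - x - j)"
  define B3 where "B3 = pochhammer (c3 + 1 + of_nat (N - x - j)) x"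
  define H where "H = pochhammer (c0 + c4 + of_nat j + 1) (N - x + 1)"
  define Uu where "Uu = pochhammer (of_nat (N - j) + 2 + c1 + c2 + c3) x"
  have r1: "pochhammer (of_nat x + c1 + c2 + 1) (N + 1) = QK * G"
    unfolding QK_def G_def using pochhammer_product'[of "of_nat x + c1 + c2 + 1" "N - j + 1" j] jN
    by (simp add: algebra_simps)
  have r2: "pochhammer (of_nat (N - x) + 2 + c3 + c0 + c4) j = sj * G"
  proof -
    have a: "- (of_nat N + of_nat x + 1 + c1 + c2) = of_nat (N - x) + 2 + c3 + c0 + c4"
      using xN unfolding c0 by (simp add: of_nat_diff algebra_simps)
    have b: "of_nat N + of_nat x + 1 + c1 + c2 - of_nat j + 1 = of_nat x + c1 + c2 + 1 + of_nat (N - j + 1)"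
      using jN by (simp add: of_nat_diff algebra_simps)
    show ?thesis using pochhammer_minus[of "of_nat N + of_nat x + 1 + c1 + c2" j] unfolding a b sj_def G_def .
  qed
  have r3: "pochhammer (c3 + 1) (N - x - j) = A3" unfolding A3_def ..
  have r4: "pochhammer (c3 + 1) (N - j) = A3 * B3"
    unfolding A3_def B3_def using pochhammer_product'[of "c3 + 1" "N - x - j" x] xj
    by (simp add: algebra_simps)
  have r5: "pochhammer (- c3 - of_nat (N - j)) x = sx * B3"
  proof -
    have a: "- (c3 + of_nat (N - j)) = - c3 - of_nat (N - j)" by simp
    have b: "c3 + of_nat (N - j) - of_nat x + 1 = c3 + 1 + of_nat (N - x - j)"
      using xj by (simp add: of_nat_diff algebra_simps)
    show ?thesis using pochhammer_minus[of "c3 + of_nat (N - j)" x] unfolding a b sx_def B3_def .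
  qed
  have r6: "pochhammer (of_nat j + c4 + c0 + 1) (N + 1) = H * (sx * Uu)"
  proof -
    have p: "pochhammer (of_nat j + c4 + c0 + 1) (N + 1) = H * pochhammer (c0 + c4 + of_nat j + 1 + of_nat (N - x + 1)) x"
      unfolding H_def using pochhammer_product'[of "c0 + c4 + of_nat j + 1" "N - x + 1" x] xN
      by (simp add: algebra_simps)
    have a: "- (of_nat (N - j) + of_nat x + 1 + c1 + c2 + c3) = c0 + c4 + of_nat j + 1 + of_nat (N - x + 1)"
      using xN jN unfolding c0 by (simp add: of_nat_diff algebra_simps)
    have b: "of_nat (N - j) + of_nat x + 1 + c1 + c2 + c3 - of_nat x + 1 = of_nat (N - j) + 2 + c1 + c2 + c3"
      by (simp add: algebra_simps)
    have "pochhammer (c0 + c4 + of_nat j + 1 + of_nat (N - x + 1)) x = sx * Uu"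
      using pochhammer_minus[of "of_nat (N - j) + of_nat x + 1 + c1 + c2 + c3" x] unfolding a b sx_def Uu_def .
    then show ?thesis unfolding p by simp
  qed
  have r7: "N - x - j = N - j - x" by simp
  have r8: "2 * of_nat j + c4 + c0 + 1 = 2 * of_nat j + c0 + c4 + (1::complex)" by (simp add: algebra_simps)
  have P1x: "pochhammer (c1 + 1) x \<noteq> 0" by (rule nz1(7)) simp
  have QK0: "QK \<noteq> 0" unfolding QK_def by (rule nz1(10)) (simp add: algebra_simps)
  have G0: "G \<noteq> 0" unfolding G_def by (rule nz1(10)) (simp add: algebra_simps)
  have P4j: "pochhammer (c4 + 1) j \<noteq> 0" by (rule nz2(7)) simp
  have H0: "H \<noteq> 0" unfolding H_def by (rule nz2(10)) (simp add: algebra_simps)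
  have U0: "Uu \<noteq> 0" unfolding Uu_def by (rule nz1(12)) (simp add: algebra_simps)
  have sx0: "sx \<noteq> 0" unfolding sx_def by simp
  have B30: "B3 \<noteq> 0" unfolding B3_def by (rule nz1(9)) (simp add: algebra_simps)
  have sxx: "sx * sx = 1" unfolding sx_def by (simp add: power_mult_distrib[symmetric])
  have ch: "of_nat (N choose x) * of_nat ((N - x) choose j) = (of_nat (N choose j) * of_nat ((N - j) choose x) :: complex)"
    by (rule choose_swap[OF xj])
  have mj: "N - x - j = N - x - j" ..
  show ?thesis
    unfolding Lambda_def Omega_def Wt_def r1 r2 r4 r5 r6 r8 sx_def[symmetric] sj_def[symmetric] r3
    unfolding r7[symmetric] A3_def[symmetric] H_def[symmetric] QK_def[symmetric] Uu_def[symmetric]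
    by (rule abs_P[OF P1x QK0 G0 P4j H0 U0 sx0 B30 ch sxx])
qed


lemma Ylem:
  assumes g: "gen a b c"
  shows "(\<Sum>y\<le>M. Omega y a b c M * racah_p j y c b a M * racah_p l y c b a M) = (if j = l \<and> j \<le> M then Omega j c b a M else 0)"
proof (cases "j \<le> M \<and> l \<le> M")
  case False
  then have "Omega j c b a M = 0 \<or> Omega l c b a M = 0" by (auto simp: Omega_def)
  then have "(\<Sum>y\<le>M. Omega y a b c M * racah_p j y c b a M * racah_p l y c b a M) = 0"
    by (auto simp: racah_p_def)
  then show ?thesis using False by auto
next
  case True
  then have jM: "j \<le> M" and lM: "l \<le> M" by auto
  have "(\<Sum>y\<le>M. Omega y a b c M * racah_p j y c b a M * racah_p l y c b a M)
     = Omega j c b a M * Omega l c b a M * (\<Sum>y\<le>M. Omega y a b c M * F43 y j a b c M * F43 y l a b c M)"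
    unfolding sum_distrib_left racah_p_def
    by (rule sum.cong) (simp_all add: F43_sym[of j] F43_sym[of l] algebra_simps)
  also have "\<dots> = (if j = l \<and> j \<le> M then Omega j c b a M else 0)"
  proof (cases "j = l")
    case False
    then show ?thesis using orthV[OF g jM lM False] by simp
  next
    case True
    have n: "pochhammer (c + 1) M * Wt l a b c M * (\<Sum>y\<le>M. Omega y a b c M * F43 y l a b c M * F43 y l a b c M) = 1"
      by (rule norms(2)[OF g lM])
    have d: "Omega l c b a M = pochhammer (c + 1) M * Wt l a b c M"
      by (rule Omega_dual[OF gen_swap[OF g] lM])
    show ?thesis using n lM unfolding True d by (simp add: algebra_simps)
  qed
  finally show ?thesis .
qed

theorem mainTheorem1:
  fixes N i j k l :: nat and c0 c1 c2 c3 c4 :: complex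
  assumes sum: "c0 + c1 + c2 + c3 + c4 = - 2 * of_nat N - 3"
    and generic: "\<forall>c \<in> {c0, c1, c2, c3, c4, c1 + c2, c2 + c3, c0 + c3, c0 + c4,
                         c1 + c2 + c3, c0 + c3 + c4}. c \<notin> \<int>"
    and ij: "i + j \<le> N" and kl: "k + l \<le> N"
  shows "(\<Sum>x\<le>N. \<Sum>y\<le>N - x.
            Lambda x c1 c2 N * Omega y c4 c0 c3 (N - x)
            * tratnik i j x y c0 c1 c2 c3 c4 N * tratnik k l x y c0 c1 c2 c3 c4 N)
         = (if i = k \<and> j = l then Lambda j c4 c0 N * Omega i c1 c2 c3 (N - j) else 0)"
proof -
  have g1: "gen c1 c2 c3" using generic unfolding gen_def by simp
  have g2: "gen c4 c0 c3" using generic unfolding gen_def by (simp add: ac_simps)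
  define Y where "Y x = (\<Sum>y\<le>N - x. Omega y c4 c0 c3 (N - x) * racah_p j y c3 c0 c4 (N - x) * racah_p l y c3 c0 c4 (N - x))" for x
  have step1: "(\<Sum>x\<le>N. \<Sum>y\<le>N - x.
            Lambda x c1 c2 N * Omega y c4 c0 c3 (N - x)
            * tratnik i j x y c0 c1 c2 c3 c4 N * tratnik k l x y c0 c1 c2 c3 c4 N)
       = (\<Sum>x\<le>N. Lambda x c1 c2 N * racah_p i x c1 c2 c3 (N - j) * racah_p k x c1 c2 c3 (N - l) * Y x)"
    unfolding tratnik_def Y_def
    by (rule sum.cong) (simp_all add: sum_distrib_left algebra_simps)
  have Yv: "Y x = (if j = l \<and> j \<le> N - x then Omega j c3 c0 c4 (N - x) else 0)" for x
    unfolding Y_def by (rule Ylem[OF g2])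
  show ?thesis
  proof (cases "j = l")
    case False
    then show ?thesis unfolding step1 Yv by simp
  next
    case True
    note jl = True
    have iK: "i \<le> (N - j)" and kK: "k \<le> (N - j)" using ij kl jl by auto
    have "(\<Sum>x\<le>N. Lambda x c1 c2 N * racah_p i x c1 c2 c3 (N - j) * racah_p k x c1 c2 c3 (N - l) * Y x)
       = (\<Sum>x\<le>(N - j). Lambda x c1 c2 N * racah_p i x c1 c2 c3 (N - j) * racah_p k x c1 c2 c3 (N - j) * Omega j c3 c0 c4 (N - x))"
    proof -
      have "(\<Sum>x\<le>N. Lambda x c1 c2 N * racah_p i x c1 c2 c3 (N - j) * racah_p k x c1 c2 c3 (N - l) * Y x)
         = (\<Sum>x\<le>(N - j). Lambda x c1 c2 N * racah_p i x c1 c2 c3 (N - j) * racah_p k x c1 c2 c3 (N - l) * Y x)"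
      proof (rule sum.mono_neutral_right)
        show "finite {..N}" by simp
        show "{..(N - j)} \<subseteq> {..N}" by auto
        show "\<forall>x\<in>{..N} - {..(N - j)}. Lambda x c1 c2 N * racah_p i x c1 c2 c3 (N - j) * racah_p k x c1 c2 c3 (N - l) * Y x = 0"
        proof
          fix x assume "x \<in> {..N} - {..(N - j)}"
          then have "\<not> j \<le> N - x" by auto
          then show "Lambda x c1 c2 N * racah_p i x c1 c2 c3 (N - j) * racah_p k x c1 c2 c3 (N - l) * Y x = 0"
            unfolding Yv by simp
        qed
      qed
      also have "\<dots> = (\<Sum>x\<le>(N - j). Lambda x c1 c2 N * racah_p i x c1 c2 c3 (N - j) * racah_p k x c1 c2 c3 (N - j) * Omega j c3 c0 c4 (N - x))"
      proof (rule sum.cong)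
        fix x assume "x \<in> {..(N - j)}"
        then have jx: "j \<le> N - x" using ij by auto
        show "Lambda x c1 c2 N * racah_p i x c1 c2 c3 (N - j) * racah_p k x c1 c2 c3 (N - l) * Y x
          = Lambda x c1 c2 N * racah_p i x c1 c2 c3 (N - j) * racah_p k x c1 c2 c3 (N - j) * Omega j c3 c0 c4 (N - x)"
          unfolding Yv using jx jl by simp
      qed simp
      finally show ?thesis .
    qed
    also have "\<dots> = (\<Sum>x\<le>(N - j). Lambda j c4 c0 N * pochhammer (c3 + 1) (N - j) * Omega i c1 c2 c3 (N - j) * Omega k c1 c2 c3 (N - j)
        * (Wt x c1 c2 c3 (N - j) * F43 i x c1 c2 c3 (N - j) * F43 k x c1 c2 c3 (N - j)))"
    proof (rule sum.cong)
      fix x assume "x \<in> {..(N - j)}"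
      then have xj: "x + j \<le> N" using ij by auto
      have eq: "Lambda x c1 c2 N * Omega j c3 c0 c4 (N - x) = Lambda j c4 c0 N * pochhammer (c3 + 1) (N - j) * Wt x c1 c2 c3 (N - j)"
        by (rule Pid[OF sum g1 g2 xj])
      have "Lambda x c1 c2 N * racah_p i x c1 c2 c3 (N - j) * racah_p k x c1 c2 c3 (N - j) * Omega j c3 c0 c4 (N - x)
         = (Lambda x c1 c2 N * Omega j c3 c0 c4 (N - x)) * (Omega i c1 c2 c3 (N - j) * F43 i x c1 c2 c3 (N - j) * (Omega k c1 c2 c3 (N - j) * F43 k x c1 c2 c3 (N - j)))"
        unfolding racah_p_def by (simp only: mult_ac)
      then show "Lambda x c1 c2 N * racah_p i x c1 c2 c3 (N - j) * racah_p k x c1 c2 c3 (N - j) * Omega j c3 c0 c4 (N - x)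
         = Lambda j c4 c0 N * pochhammer (c3 + 1) (N - j) * Omega i c1 c2 c3 (N - j) * Omega k c1 c2 c3 (N - j)
        * (Wt x c1 c2 c3 (N - j) * F43 i x c1 c2 c3 (N - j) * F43 k x c1 c2 c3 (N - j))"
        unfolding eq by (simp only: mult_ac)
    qed simp
    also have "\<dots> = Lambda j c4 c0 N * pochhammer (c3 + 1) (N - j) * Omega i c1 c2 c3 (N - j) * Omega k c1 c2 c3 (N - j)
        * (\<Sum>x\<le>(N - j). Wt x c1 c2 c3 (N - j) * F43 i x c1 c2 c3 (N - j) * F43 k x c1 c2 c3 (N - j))"
      by (simp add: sum_distrib_left)
    also have "\<dots> = (if i = k \<and> j = l then Lambda j c4 c0 N * Omega i c1 c2 c3 (N - j) else 0)"
    proof (cases "i = k")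
      case False
      then show ?thesis using orth[OF g1 iK kK False] by simp
    next
      case True
      have n: "pochhammer (c3 + 1) (N - j) * Omega i c1 c2 c3 (N - j) * (\<Sum>x\<le>(N - j). Wt x c1 c2 c3 (N - j) * F43 i x c1 c2 c3 (N - j) * F43 i x c1 c2 c3 (N - j)) = 1"
        by (rule norms(1)[OF g1 iK])
      show ?thesis using n jl unfolding True by (simp add: algebra_simps)
    qed
    finally show ?thesis unfolding step1 .
  qed
qed

end
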